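(* Let $R$ be a finite commutative principal ideal ring with canonical decomposition $R\cong\prod_{i=1}^kR_i$, where $R_i$ has residue field $\mathbb F_{q_i}$, and let $n$ be a positive integer with $\gcd(n,q_i)=1$ for all $i$. Let $C=\mathrm{CRT}(C_1,\dots,C_k)$ be a cyclic code of length $n$ over $R$. If there exists $i$ such that $q_i$ is odd and $C_i$ is a free $R_i$-module, then $C$ is not self-dual.
   Context: All rings are finite, commutative, with identity. $R_i=R/\mathfrak m_i^{t_i}$ are finite chain rings ($\mathfrak m_i$ the maximal ideals of $R$, $t_i$ their indices of stability), $\psi_i:R\to R_i$ the canonical projections extended coordinatewise, and $\mathrm{CRT}(C_1,\dots,C_k)=\{u\in R^n:\psi_i(u)\in C_i\ \forall i\}$; the components $C_i=\psi_i(C)$. A code is free if it is a free module. Cyclic: closed under cyclic shift; self-dual: $C=C^\perp$ for $[u,v]=\sum u_jv_j$. *)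

theory Defs
  imports "HOL-Algebra.Ideal_Product" "HOL-Algebra.QuotRing" "HOL-Library.FuncSet"
begin

definition vecs :: "('a, 'b) ring_scheme \<Rightarrow> nat \<Rightarrow> 'a list set" where
  "vecs S n = {u. length u = n \<and> set u \<subseteq> carrier S}"

definition vadd :: "('a, 'b) ring_scheme \<Rightarrow> 'a list \<Rightarrow> 'a list \<Rightarrow> 'a list" where
  "vadd S u v = map2 (\<lambda>x y. x \<oplus>\<^bsub>S\<^esub> y) u v"

definition vsmult :: "('a, 'b) ring_scheme \<Rightarrow> 'a \<Rightarrow> 'a list \<Rightarrow> 'a list" where
  "vsmult S r u = map (\<lambda>x. r \<otimes>\<^bsub>S\<^esub> x) u"

definition lin_code :: "('a, 'b) ring_scheme \<Rightarrow> nat \<Rightarrow> 'a list set \<Rightarrow> bool" where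
  "lin_code S n C \<longleftrightarrow> C \<subseteq> vecs S n \<and> C \<noteq> {} \<and>
     (\<forall>u\<in>C. \<forall>v\<in>C. vadd S u v \<in> C) \<and>
     (\<forall>r\<in>carrier S. \<forall>u\<in>C. vsmult S r u \<in> C)"

definition cshift :: "'a list \<Rightarrow> 'a list" where
  "cshift u = (if u = [] then [] else last u # butlast u)"

definition cyclic_code :: "('a, 'b) ring_scheme \<Rightarrow> nat \<Rightarrow> 'a list set \<Rightarrow> bool" where
  "cyclic_code S n C \<longleftrightarrow> lin_code S n C \<and> (\<forall>u\<in>C. cshift u \<in> C)"

definition inner :: "('a, 'b) ring_scheme \<Rightarrow> nat \<Rightarrow> 'a list \<Rightarrow> 'a list \<Rightarrow> 'a" where
  "inner S n u v = (\<Oplus>\<^bsub>S\<^esub> j\<in>{..<n}. u ! j \<otimes>\<^bsub>S\<^esub> v ! j)"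

definition dual_code :: "('a, 'b) ring_scheme \<Rightarrow> nat \<Rightarrow> 'a list set \<Rightarrow> 'a list set" where
  "dual_code S n C = {v \<in> vecs S n. \<forall>u\<in>C. inner S n u v = \<zero>\<^bsub>S\<^esub>}"

definition ideal_pow :: "('a, 'b) ring_scheme \<Rightarrow> 'a set \<Rightarrow> nat \<Rightarrow> 'a set" where
  "ideal_pow S I t = I [^]\<^bsub>ideals_set S\<^esub> t"

definition stab_index :: "('a, 'b) ring_scheme \<Rightarrow> 'a set \<Rightarrow> nat" where
  "stab_index S I = (LEAST t. ideal_pow S I t = ideal_pow S I (Suc t))"

definition psi :: "('a, 'b) ring_scheme \<Rightarrow> 'a set \<Rightarrow> 'a list \<Rightarrow> 'a set list" where
  "psi S I u = map (\<lambda>x. I +>\<^bsub>S\<^esub> x) u"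

text \<open>The component of C at the maximal ideal m: psi_m(C), a code over R/m^t.\<close>
definition component :: "('a, 'b) ring_scheme \<Rightarrow> 'a set \<Rightarrow> 'a list set \<Rightarrow> 'a set list set" where
  "component S m C = psi S (ideal_pow S m (stab_index S m)) ` C"

definition lincomb :: "('a, 'b) ring_scheme \<Rightarrow> nat \<Rightarrow> ('a list \<Rightarrow> 'a) \<Rightarrow> 'a list set \<Rightarrow> 'a list" where
  "lincomb S n f B = map (\<lambda>j. \<Oplus>\<^bsub>S\<^esub> b\<in>B. f b \<otimes>\<^bsub>S\<^esub> b ! j) [0..<n]"

definition free_code :: "('a, 'b) ring_scheme \<Rightarrow> nat \<Rightarrow> 'a list set \<Rightarrow> bool" where
  "free_code S n M \<longleftrightarrow> (\<exists>B. finite B \<and> B \<subseteq> M \<and>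
     (\<forall>v\<in>M. \<exists>!f. f \<in> B \<rightarrow>\<^sub>E carrier S \<and> v = lincomb S n f B))"

definition finite_cpir :: "('a, 'b) ring_scheme \<Rightarrow> bool" where
  "finite_cpir S \<longleftrightarrow> cring S \<and> finite (carrier S) \<and> (\<forall>I. ideal I S \<longrightarrow> principalideal I S)"

end

theory Submission
  imports Defs
begin


context cring begin

lemma ipow_0: "ideal_pow R m 0 = carrier R"
  by (simp add: ideal_pow_def ideals_set_def)

lemma ipow_Suc: "ideal_pow R m (Suc k) = ideal_pow R m k \<cdot> m"
  by (simp add: ideal_pow_def ideals_set_def)

lemma ipow_ideal: "ideal m R \<Longrightarrow> ideal (ideal_pow R m k) R"
  by (induct k) (auto simp: ipow_0 ipow_Suc ideal_prod_is_ideal oneideal)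

lemma ipow_step: "ideal m R \<Longrightarrow> ideal_pow R m (Suc k) \<subseteq> ideal_pow R m k"
  using ideal_prod_inter[OF ipow_ideal] by (auto simp: ipow_Suc)

lemma ipow_sub: "ideal m R \<Longrightarrow> k \<ge> 1 \<Longrightarrow> ideal_pow R m k \<subseteq> m"
proof (induct k)
  case 0 then show ?case by simp
next
  case (Suc k)
  then show ?case using ideal_prod_inter[OF ipow_ideal[OF Suc(2)] Suc(2), of k]
    by (auto simp: ipow_Suc)
qed

lemma ipow_1: "ideal m R \<Longrightarrow> ideal_pow R m 1 = m"
  using ideal_prod_commute[OF oneideal, of m] ideal_prod_one[of m]
  by (simp add: ipow_Suc ipow_0)

lemma ipow_add: "ideal m R \<Longrightarrow> ideal_pow R m (a + b) = ideal_pow R m a \<cdot> ideal_pow R m b"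
proof -
  assume "ideal m R"
  interpret M: monoid "ideals_set R"
    using comm_monoid.axioms(1)[OF ideals_set_is_comm_monoid] .
  have "m \<in> carrier (ideals_set R)" using \<open>ideal m R\<close> by (simp add: ideals_set_def)
  from M.nat_pow_mult[OF this, of a b, symmetric] show ?thesis
    by (simp add: ideal_pow_def ideals_set_def)
qed

lemma ipow_stab_exists:
  assumes "finite (carrier R)" "ideal m R"
  shows "\<exists>t. ideal_pow R m t = ideal_pow R m (Suc t)"
proof (rule ccontr)
  assume "\<not> ?thesis"
  hence ne: "\<And>t. ideal_pow R m (Suc t) \<noteq> ideal_pow R m t" by metis
  have fin: "\<And>k. finite (ideal_pow R m k)"
    using assms ideal.Icarr[OF ipow_ideal[OF assms(2)]] by (meson finite_subset subsetI)
  have "card (ideal_pow R m k) + k \<le> card (carrier R)" for k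
  proof (induct k)
    case 0 then show ?case by (simp add: ipow_0)
  next
    case (Suc k)
    have "ideal_pow R m (Suc k) \<subset> ideal_pow R m k" using ipow_step[OF assms(2)] ne by blast
    hence "card (ideal_pow R m (Suc k)) < card (ideal_pow R m k)" using fin psubset_card_mono by blast
    then show ?case using Suc by simp
  qed
  from this[of "Suc (card (carrier R))"] show False by linarith
qed

lemma ipow_stab:
  assumes "finite (carrier R)" "maximalideal m R"
  defines "t \<equiv> stab_index R m"
  shows "ideal_pow R m t = ideal_pow R m (Suc t)" "t \<ge> 1"
    "ideal_pow R m t = ideal_pow R m t \<cdot> ideal_pow R m t"
proof -
  have im: "ideal m R" using assms(2) maximalideal.axioms(1) by blast
  show 1: "ideal_pow R m t = ideal_pow R m (Suc t)"
    unfolding t_def stab_index_def using ipow_stab_exists[OF assms(1) im] by (rule LeastI_ex)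
  show "t \<ge> 1"
  proof (rule ccontr)
    assume "\<not> t \<ge> 1" hence "t = 0" by simp
    with 1 have "carrier R = m" using ipow_0 ipow_1[OF im] by (metis One_nat_def)
    thus False using maximalideal.I_notcarr[OF assms(2)] by simp
  qed
  have "ideal_pow R m (t + k) = ideal_pow R m t" for k
  proof (induct k)
    case (Suc k)
    have "ideal_pow R m (t + Suc k) = ideal_pow R m (t + k) \<cdot> m" by (simp add: ipow_Suc)
    also have "\<dots> = ideal_pow R m (Suc t)" by (simp add: Suc ipow_Suc)
    finally show ?case using 1 by simp
  qed simp
  from this[of t] ipow_add[OF im, of t t] show "ideal_pow R m t = ideal_pow R m t \<cdot> ideal_pow R m t"
    by simp
qed

lemma idem_gen:
  assumes "g \<in> carrier R" "PIdl g = (PIdl g) \<cdot> (PIdl g)"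
  shows "\<exists>r\<in>carrier R. g = r \<otimes> (g \<otimes> g)"
proof -
  have "s \<in> (PIdl g) \<cdot> (PIdl g) \<Longrightarrow> \<exists>r\<in>carrier R. s = r \<otimes> (g \<otimes> g)" for s
  proof (induct s rule: ideal_prod.induct)
    case (prod i j)
    then obtain x y where "x \<in> carrier R" "y \<in> carrier R" "i = x \<otimes> g" "j = y \<otimes> g"
      by (auto simp: cgenideal_def)
    thus ?case using assms(1) by (intro bexI[of _ "x \<otimes> y"]) (simp_all add: m_ac)
  next
    case (sum s1 s2)
    then obtain r1 r2 where "r1 \<in> carrier R" "r2 \<in> carrier R" "s1 = r1 \<otimes> (g \<otimes> g)" "s2 = r2 \<otimes> (g \<otimes> g)"
      by auto
    thus ?case using assms(1) by (intro bexI[of _ "r1 \<oplus> r2"]) (simp_all add: l_distr)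
  qed
  moreover have "g \<in> PIdl g" using assms(1) cgenideal_self by blast
  hence "g \<in> (PIdl g) \<cdot> (PIdl g)" using assms(2) by metis
  ultimately show ?thesis by blast
qed

end



definition vsum :: "('a, 'b) ring_scheme \<Rightarrow> nat \<Rightarrow> 'a list \<Rightarrow> 'a" where
  "vsum S n u = (\<Oplus>\<^bsub>S\<^esub> j\<in>{..<n}. u ! j)"

primrec rsum :: "('a, 'b) ring_scheme \<Rightarrow> 'a list \<Rightarrow> nat \<Rightarrow> 'a list" where
  "rsum S u 0 = replicate (length u) \<zero>\<^bsub>S\<^esub>"
| "rsum S u (Suc k) = vadd S (rsum S u k) (rotate k u)"

lemma rotate1_cshift: "u \<noteq> [] \<Longrightarrow> rotate1 (cshift u) = u"
  by (simp add: cshift_def)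

lemma cshift_rotate: assumes "length u = n" "n > 0" shows "cshift u = rotate (n - 1) u"
proof -
  have ne: "u \<noteq> []" using assms by auto
  have len: "length (cshift u) = n" using assms ne by (simp add: cshift_def)
  have "rotate (n - 1) (rotate1 (cshift u)) = rotate n (cshift u)"
    using assms(2) by (metis Suc_pred rotate_Suc rotate_rotate One_nat_def add.commute plus_1_eq_Suc rotate1_rotate_swap)
  also have "\<dots> = cshift u" using len by simp
  finally show ?thesis using rotate1_cshift[OF ne] by simp
qed

lemma sq_mod: "n > 0 \<Longrightarrow> ((n - 1) * (n - 1)) mod n = 1 mod (n::nat)"
proof (cases "n = 1")
  case False
  assume "n > 0"
  then obtain k where k: "n = Suc (Suc k)" using False by (metis One_nat_def gr0_conv_Suc not0_implies_Suc)
  have "(n - 1) * (n - 1) = 1 + n * k" unfolding k by (simp add: algebra_simps)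
  moreover have "(1 + n * k) mod n = 1 mod n" by (metis mod_mult_self1 mult.commute)
  ultimately show ?thesis by metis
qed simp

context cring begin

lemma code_vecs: "lin_code R n C \<Longrightarrow> u \<in> C \<Longrightarrow> length u = n \<and> set u \<subseteq> carrier R"
  by (auto simp: lin_code_def vecs_def)

lemma code_zero: assumes "lin_code R n C" shows "replicate n \<zero> \<in> C"
proof -
  obtain u where u: "u \<in> C" using assms by (auto simp: lin_code_def)
  hence "vsmult R \<zero> u \<in> C" using assms by (auto simp: lin_code_def)
  moreover have "vsmult R \<zero> u = replicate n \<zero>"
    using code_vecs[OF assms u] by (auto simp: vsmult_def intro!: nth_equalityI) (metis l_null nth_mem subsetD)
  ultimately show ?thesis by simp
qed

lemma code_rotate:
  assumes cyc: "cyclic_code R n C" and n: "n > 0" and u: "u \<in> C"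
  shows "rotate k u \<in> C"
proof -
  have lc: "lin_code R n C" using cyc by (simp add: cyclic_code_def)
  have A: "rotate (n - 1) v \<in> C" if "v \<in> C" for v
  proof -
    have "cshift v \<in> C" using that cyc by (auto simp: cyclic_code_def)
    moreover have "cshift v = rotate (n - 1) v" using cshift_rotate[OF _ n] code_vecs[OF lc that] by auto
    ultimately show ?thesis by simp
  qed
  have B: "rotate (j * (n - 1)) v \<in> C" if "v \<in> C" for v j
  proof (induct j)
    case 0 then show ?case using that by simp
  next
    case (Suc j)
    have "rotate (Suc j * (n - 1)) v = rotate (n - 1) (rotate (j * (n - 1)) v)"
      by (simp add: rotate_rotate)
    then show ?case using A[OF Suc] by simp
  qed
  have R1: "rotate 1 v \<in> C" if "v \<in> C" for v
  proof -
    have len: "length v = n" using code_vecs[OF lc that] by simp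
    have "rotate ((n - 1) * (n - 1)) v = rotate (((n - 1) * (n - 1)) mod n) v"
      using len by (metis rotate_conv_mod)
    also have "\<dots> = rotate 1 v" using sq_mod[OF n] len by (metis rotate_conv_mod)
    finally show ?thesis using B[OF that, of "n - 1"] by simp
  qed
  show ?thesis
  proof (induct k)
    case 0 then show ?case using u by simp
  next
    case (Suc k)
    have "rotate (Suc k) u = rotate 1 (rotate k u)" by (simp add: rotate_rotate)
    then show ?case using R1[OF Suc] by simp
  qed
qed

lemma rsum_props:
  assumes cyc: "cyclic_code R n C" and n: "n > 0" and u: "u \<in> C"
  shows "rsum R u k \<in> C \<and> length (rsum R u k) = n \<and>
     (\<forall>j<n. rsum R u k ! j = (\<Oplus>s\<in>{..<k}. u ! ((j + s) mod n)))"
proof (induct k)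
  have lc: "lin_code R n C" using cyc by (simp add: cyclic_code_def)
  case 0 
  then show ?case using code_zero[OF lc] code_vecs[OF lc u] by simp
next
  have lc: "lin_code R n C" using cyc by (simp add: cyclic_code_def)
  case (Suc k)
  have rk: "rotate k u \<in> C" using code_rotate[OF cyc n u] .
  have uv: "length u = n" "set u \<subseteq> carrier R" using code_vecs[OF lc u] by auto
  have mem: "rsum R u (Suc k) \<in> C" using Suc rk lc by (auto simp: lin_code_def)
  have len: "length (rsum R u (Suc k)) = n" using Suc uv by (simp add: vadd_def)
  have "rsum R u (Suc k) ! j = (\<Oplus>s\<in>{..<Suc k}. u ! ((j + s) mod n))" if j: "j < n" for j
  proof -
    have c: "u ! i \<in> carrier R" if "i < n" for i using uv that by auto
    have "rsum R u (Suc k) ! j = rsum R u k ! j \<oplus> rotate k u ! j"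
      using Suc uv j by (simp add: vadd_def)
    also have "\<dots> = (\<Oplus>s\<in>{..<k}. u ! ((j + s) mod n)) \<oplus> u ! ((j + k) mod n)"
      using Suc j uv by (simp add: nth_rotate add.commute[of k j])
    also have "\<dots> = (\<Oplus>s\<in>{..<Suc k}. u ! ((j + s) mod n))"
      using c n by (simp add: finsum_insert lessThan_Suc a_comm Pi_def)
    finally show ?thesis .
  qed
  then show ?case using mem len by simp
qed

lemma mod_shift_bij:
  assumes n: "n > (0::nat)" and j: "j < n"
  shows "inj_on (\<lambda>s. (j + s) mod n) {..<n}" "(\<lambda>s. (j + s) mod n) ` {..<n} = {..<n}"
proof -
  show inj: "inj_on (\<lambda>s. (j + s) mod n) {..<n}"
  proof
    fix x y assume "x \<in> {..<n}" "y \<in> {..<n}" "(j + x) mod n = (j + y) mod n"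
    have h: "((j + z) mod n + (n - j)) mod n = z" if "z < n" for z
    proof -
      have "((j + z) mod n + (n - j)) mod n = (j + z + (n - j)) mod n" by (simp add: mod_add_left_eq)
      also have "j + z + (n - j) = z + n" using j by simp
      finally show ?thesis using that by simp
    qed
    thus "x = y" using \<open>x \<in> {..<n}\<close> \<open>y \<in> {..<n}\<close> \<open>(j + x) mod n = (j + y) mod n\<close> by (metis lessThan_iff)
  qed
  show "(\<lambda>s. (j + s) mod n) ` {..<n} = {..<n}"
    by (rule endo_inj_surj) (use inj n in auto)
qed

lemma const_in_code:
  assumes cyc: "cyclic_code R n C" and n: "n > 0" and u: "u \<in> C"
  shows "replicate n (vsum R n u) \<in> C"
proof -
  have lc: "lin_code R n C" using cyc by (simp add: cyclic_code_def)
  have uv: "length u = n" "set u \<subseteq> carrier R" using code_vecs[OF lc u] by auto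
  have c: "(\<lambda>i. u ! i) \<in> {..<n} \<rightarrow> carrier R" using uv by auto
  note P = rsum_props[OF cyc n u, of n]
  have "rsum R u n = replicate n (vsum R n u)"
  proof (rule nth_equalityI)
    show "length (rsum R u n) = length (replicate n (vsum R n u))" using P by simp
    fix j assume "j < length (rsum R u n)"
    hence j: "j < n" using P by simp
    have "rsum R u n ! j = (\<Oplus>s\<in>{..<n}. u ! ((j + s) mod n))" using P j by simp
    also have "\<dots> = (\<Oplus>s\<in>(\<lambda>s. (j + s) mod n) ` {..<n}. u ! s)"
      by (rule finsum_reindex[symmetric]) (use mod_shift_bij[OF n j] c in auto)
    also have "\<dots> = vsum R n u" using mod_shift_bij[OF n j] by (simp add: vsum_def)
    finally show "rsum R u n ! j = replicate n (vsum R n u) ! j" using j by simp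
  qed
  thus ?thesis using P by simp
qed

lemma vsum_closed: "set u \<subseteq> carrier R \<Longrightarrow> length u = n \<Longrightarrow> vsum R n u \<in> carrier R"
  by (auto simp: vsum_def intro!: finsum_closed)

lemma inner_const_l:
  assumes "length v = n" "set v \<subseteq> carrier R" "a \<in> carrier R"
  shows "inner R n (replicate n a) v = a \<otimes> vsum R n v"
proof -
  have vc: "\<And>j. j < n \<Longrightarrow> v ! j \<in> carrier R" using assms by (auto dest!: nth_mem)
  have "inner R n (replicate n a) v = (\<Oplus>j\<in>{..<n}. a \<otimes> v ! j)"
    unfolding inner_def by (rule finsum_cong) (use assms vc in auto)
  also have "\<dots> = a \<otimes> vsum R n v" unfolding vsum_def
    by (rule finsum_rdistr[symmetric]) (use assms in auto)
  finally show ?thesis .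
qed

lemma inner_const_r:
  assumes "length v = n" "set v \<subseteq> carrier R" "a \<in> carrier R"
  shows "inner R n v (replicate n a) = vsum R n v \<otimes> a"
proof -
  have vc: "\<And>j. j < n \<Longrightarrow> v ! j \<in> carrier R" using assms by (auto dest!: nth_mem)
  have "inner R n v (replicate n a) = (\<Oplus>j\<in>{..<n}. v ! j \<otimes> a)"
    unfolding inner_def by (rule finsum_cong) (use assms vc in auto)
  also have "\<dots> = vsum R n v \<otimes> a" unfolding vsum_def
    by (rule finsum_ldistr[symmetric]) (use assms in auto)
  finally show ?thesis .
qed

end



context cring begin

lemma finsum_swap:
  assumes "finite A" "finite B" "\<And>i j. i \<in> A \<Longrightarrow> j \<in> B \<Longrightarrow> f i j \<in> carrier R"
  shows "(\<Oplus>i\<in>A. \<Oplus>j\<in>B. f i j) = (\<Oplus>j\<in>B. \<Oplus>i\<in>A. f i j)"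
  using assms
proof (induct A rule: finite_induct)
  case empty then show ?case by (simp add: finsum_zero)
next
  case (insert x A)
  have "(\<Oplus>i\<in>insert x A. \<Oplus>j\<in>B. f i j) = (\<Oplus>j\<in>B. f x j) \<oplus> (\<Oplus>i\<in>A. \<Oplus>j\<in>B. f i j)"
    using insert by (intro finsum_insert) (auto intro!: finsum_closed)
  also have "\<dots> = (\<Oplus>j\<in>B. f x j) \<oplus> (\<Oplus>j\<in>B. \<Oplus>i\<in>A. f i j)" using insert by simp
  also have "\<dots> = (\<Oplus>j\<in>B. f x j \<oplus> (\<Oplus>i\<in>A. f i j))"
    using insert by (intro finsum_addf[symmetric]) (auto intro!: finsum_closed)
  also have "\<dots> = (\<Oplus>j\<in>B. \<Oplus>i\<in>insert x A. f i j)"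
    using insert by (intro finsum_cong) (auto intro!: finsum_closed simp: finsum_insert)
  finally show ?case .
qed

end

lemma lincomb_nth:
  "j < n \<Longrightarrow> lincomb S n f B ! j = (\<Oplus>\<^bsub>S\<^esub> b\<in>B. f b \<otimes>\<^bsub>S\<^esub> b ! j)"
  by (simp add: lincomb_def)

lemma lincomb_len: "length (lincomb S n f B) = n"
  by (simp add: lincomb_def)

context cring begin

lemma free_step:
  assumes lc: "lin_code R n C" and I: "ideal I R"
    and free: "free_code (R Quot I) n (psi R I ` C)"
    and a: "a \<in> carrier R" "replicate n a \<in> C"
    and ann: "\<forall>v\<in>C. vsum R n v \<otimes>\<^bsub>R\<^esub> a = \<zero>\<^bsub>R\<^esub>"
  shows "(\<Oplus>\<^bsub>R\<^esub> j\<in>{..<n}. a) \<in> I"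
proof -
  have cr: "cring R" by (rule is_cring)
  interpret I: ideal I R by fact
  define S where "S = R Quot I"
  define h where "h = (+>) I"
  interpret S: cring S unfolding S_def by (rule I.quotient_is_cring[OF cr])
  interpret H: ring_hom_cring R S h unfolding S_def h_def by (rule I.rcos_ring_hom_cring[OF cr])
  have psi: "psi R I u = map h u" for u by (simp add: psi_def h_def)
  obtain B where B: "finite B" "B \<subseteq> psi R I ` C"
    and uniq: "\<forall>v\<in>psi R I ` C. \<exists>!f. f \<in> B \<rightarrow>\<^sub>E carrier S \<and> v = lincomb S n f B"
    using free unfolding free_code_def S_def by blast
  have Bprops: "\<exists>u\<in>C. b = map h u" if "b \<in> B" for b using B that psi by auto
  have Bc: "b ! j \<in> carrier S" if bj: "b \<in> B" "j < n" for b j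
  proof -
    obtain u where "u \<in> C" "b = map h u" using Bprops[OF bj(1)] by blast
    thus ?thesis using code_vecs[OF lc] bj by (auto intro!: H.hom_closed dest!: nth_mem)
  qed
  define w where "w = map h (replicate n a)"
  have wC: "w \<in> psi R I ` C" using a(2) psi[of "replicate n a"] unfolding w_def by (metis image_eqI)
  obtain f where f: "f \<in> B \<rightarrow>\<^sub>E carrier S" "w = lincomb S n f B" using uniq wC by blast
  have fc: "f b \<in> carrier S" if "b \<in> B" for b using f that by auto
  define Z where "Z = replicate n \<zero>\<^bsub>S\<^esub>"
  have ZC: "Z \<in> psi R I ` C"
  proof -
    have "map h (replicate n \<zero>) = Z" by (simp add: Z_def)
    thus ?thesis using code_zero[OF lc] psi by (metis image_eqI)
  qed
  have zrep: "lincomb S n (\<lambda>b\<in>B. \<zero>\<^bsub>S\<^esub>) B = Z"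
  proof (rule nth_equalityI)
    show "length (lincomb S n (\<lambda>b\<in>B. \<zero>\<^bsub>S\<^esub>) B) = length Z" by (simp add: lincomb_len Z_def)
    fix j assume "j < length (lincomb S n (\<lambda>b\<in>B. \<zero>\<^bsub>S\<^esub>) B)"
    hence j: "j < n" by (simp add: lincomb_len)
    have "lincomb S n (\<lambda>b\<in>B. \<zero>\<^bsub>S\<^esub>) B ! j = (\<Oplus>\<^bsub>S\<^esub> b\<in>B. (\<lambda>b\<in>B. \<zero>\<^bsub>S\<^esub>) b \<otimes>\<^bsub>S\<^esub> b ! j)"
      by (rule lincomb_nth[OF j])
    also have "\<dots> = (\<Oplus>\<^bsub>S\<^esub> b\<in>B. \<zero>\<^bsub>S\<^esub>)"
      by (rule S.finsum_cong) (use j Bc in auto)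
    also have "\<dots> = \<zero>\<^bsub>S\<^esub>" by (rule S.finsum_zero)
    finally show "lincomb S n (\<lambda>b\<in>B. \<zero>\<^bsub>S\<^esub>) B ! j = Z ! j" using j by (simp add: Z_def)
  qed
  have wj: "lincomb S n f B ! j = h a" if "j < n" for j using f that by (metis w_def length_replicate nth_map nth_replicate)
  have K: "h (vsum R n v) \<otimes>\<^bsub>S\<^esub> f b = \<zero>\<^bsub>S\<^esub>" if v: "v \<in> C" and b: "b \<in> B" for v b
  proof -
    define s where "s = h (vsum R n v)"
    have sc: "s \<in> carrier S" unfolding s_def using code_vecs[OF lc v] vsum_closed by auto
    define g where "g = (\<lambda>b\<in>B. s \<otimes>\<^bsub>S\<^esub> f b)"
    have g: "g \<in> B \<rightarrow>\<^sub>E carrier S" unfolding g_def using sc fc by auto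
    have grep: "lincomb S n g B = Z"
    proof (rule nth_equalityI)
      show "length (lincomb S n g B) = length Z" by (simp add: lincomb_len Z_def)
      fix j assume "j < length (lincomb S n g B)"
      hence j: "j < n" by (simp add: lincomb_len)
      have "lincomb S n g B ! j = (\<Oplus>\<^bsub>S\<^esub> b\<in>B. g b \<otimes>\<^bsub>S\<^esub> b ! j)"
        by (rule lincomb_nth[OF j])
      also have "\<dots> = (\<Oplus>\<^bsub>S\<^esub> b\<in>B. s \<otimes>\<^bsub>S\<^esub> (f b \<otimes>\<^bsub>S\<^esub> b ! j))"
        by (rule S.finsum_cong) (use j Bc fc sc in \<open>auto simp: S.m_assoc g_def\<close>)
      also have "\<dots> = s \<otimes>\<^bsub>S\<^esub> (\<Oplus>\<^bsub>S\<^esub> b\<in>B. f b \<otimes>\<^bsub>S\<^esub> b ! j)"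
        using j Bc fc sc B(1) by (intro S.finsum_rdistr[symmetric]) auto
      also have "\<dots> = s \<otimes>\<^bsub>S\<^esub> h a" using wj[OF j] j by (simp add: lincomb_nth)
      also have "\<dots> = h (vsum R n v \<otimes> a)" unfolding s_def
        using code_vecs[OF lc v] vsum_closed a by auto
      also have "\<dots> = \<zero>\<^bsub>S\<^esub>" using ann v by simp
      finally show "lincomb S n g B ! j = Z ! j" using j by (simp add: Z_def)
    qed
    have "g = (\<lambda>b\<in>B. \<zero>\<^bsub>S\<^esub>)" using uniq ZC g grep zrep by auto
    hence "g b = \<zero>\<^bsub>S\<^esub>" using b by simp
    thus ?thesis using b by (simp add: g_def s_def)
  qed
  have "h (\<Oplus> j\<in>{..<n}. a) = (\<Oplus>\<^bsub>S\<^esub> j\<in>{..<n}. h a)" using a by simp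
  also have "\<dots> = (\<Oplus>\<^bsub>S\<^esub> j\<in>{..<n}. \<Oplus>\<^bsub>S\<^esub> b\<in>B. f b \<otimes>\<^bsub>S\<^esub> b ! j)"
  proof -
    have hac: "h a \<in> carrier S" using a by simp
    have "(\<Oplus>\<^bsub>S\<^esub> j\<in>{..<n}. \<Oplus>\<^bsub>S\<^esub> b\<in>B. f b \<otimes>\<^bsub>S\<^esub> b ! j) = (\<Oplus>\<^bsub>S\<^esub> j\<in>{..<n}. h a)"
    proof (rule S.finsum_cong')
      fix i assume "i \<in> {..<n}"
      thus "(\<Oplus>\<^bsub>S\<^esub> b\<in>B. f b \<otimes>\<^bsub>S\<^esub> b ! i) = h a" using wj[of i] lincomb_nth[of i n S f B] by simp
    qed (use hac in auto)
    thus ?thesis by simp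
  qed
  also have "\<dots> = (\<Oplus>\<^bsub>S\<^esub> b\<in>B. \<Oplus>\<^bsub>S\<^esub> j\<in>{..<n}. f b \<otimes>\<^bsub>S\<^esub> b ! j)"
    using B(1) Bc fc by (intro S.finsum_swap) auto
  also have "\<dots> = (\<Oplus>\<^bsub>S\<^esub> b\<in>B. \<zero>\<^bsub>S\<^esub>)"
  proof (rule S.finsum_cong')
    fix b assume b: "b \<in> B"
    obtain u where u: "u \<in> C" "b = map h u" using Bprops[OF b] by blast
    have uv: "length u = n" "set u \<subseteq> carrier R" using code_vecs[OF lc u(1)] by auto
    have "(\<Oplus>\<^bsub>S\<^esub> j\<in>{..<n}. f b \<otimes>\<^bsub>S\<^esub> b ! j) = f b \<otimes>\<^bsub>S\<^esub> (\<Oplus>\<^bsub>S\<^esub> j\<in>{..<n}. b ! j)"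
      using b Bc fc by (intro S.finsum_rdistr[symmetric]) auto
    also have "(\<Oplus>\<^bsub>S\<^esub> j\<in>{..<n}. b ! j) = (\<Oplus>\<^bsub>S\<^esub> j\<in>{..<n}. h (u ! j))"
      by (rule S.finsum_cong) (use u uv Bc b in auto)
    also have "\<dots> = h (vsum R n u)" unfolding vsum_def
      using uv by (subst H.hom_finsum) (auto dest!: nth_mem simp: comp_def)
    also have "f b \<otimes>\<^bsub>S\<^esub> h (vsum R n u) = \<zero>\<^bsub>S\<^esub>"
      using K[OF u(1) b] fc[OF b] uv vsum_closed by (simp add: S.m_comm)
    finally show "(\<Oplus>\<^bsub>S\<^esub> j\<in>{..<n}. f b \<otimes>\<^bsub>S\<^esub> b ! j) = \<zero>\<^bsub>S\<^esub>" .
  qed auto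
  also have "\<dots> = \<zero>\<^bsub>S\<^esub>" by (rule S.finsum_zero)
  finally have "I +> (\<Oplus> j\<in>{..<n}. a) = I" by (simp add: h_def S_def FactRing_def)
  moreover have "(\<Oplus> j\<in>{..<n}. a) \<in> I +> (\<Oplus> j\<in>{..<n}. a)"
    using a by (intro I.a_rcos_self) (auto intro!: finsum_closed)
  ultimately show ?thesis by simp
qed

end




context cring begin

lemma not_in_max:
  assumes fin: "finite (carrier R)" and mx: "maximalideal m R"
    and cop: "coprime n (card (carrier (R Quot m)))" and n: "n > 0"
  shows "(\<Oplus>j\<in>{..<n}. \<one>) \<notin> m"
proof
  assume N: "(\<Oplus>j\<in>{..<n}. \<one>) \<in> m"
  have cr: "cring R" by (rule is_cring)
  interpret M: maximalideal m R by fact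
  define F where "F = R Quot m"
  define h where "h = (+>) m"
  interpret F: field F unfolding F_def by (rule M.quotient_is_field[OF cr])
  interpret H: ring_hom_cring R F h unfolding F_def h_def by (rule M.rcos_ring_hom_cring[OF cr])
  have "h (\<Oplus>j\<in>{..<n}. \<one>) = (\<Oplus>\<^bsub>F\<^esub> j\<in>{..<n}. \<one>\<^bsub>F\<^esub>)" by (simp add: comp_def)
  also have "\<dots> = add_pow F (n) \<one>\<^bsub>F\<^esub>" using F.add.finprod_const[of "\<one>\<^bsub>F\<^esub>" "{..<n}"] by simp
  finally have hN: "h (\<Oplus>j\<in>{..<n}. \<one>) = add_pow F (n) \<one>\<^bsub>F\<^esub>" .
  have "h (\<Oplus>j\<in>{..<n}. \<one>) = m" unfolding h_def using N by (rule M.a_rcos_const)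
  hence n0: "add_pow F (n) \<one>\<^bsub>F\<^esub> = \<zero>\<^bsub>F\<^esub>" using hN by (simp add: F_def FactRing_def)
  have finF: "finite (carrier F)"
  proof -
    have "carrier F \<subseteq> Pow (carrier R)"
      using M.a_rcosets_part_G by (auto simp: F_def FactRing_def)
    thus ?thesis using fin by (meson finite_Pow_iff finite_subset)
  qed
  define q where "q = card (carrier F)"
  have q0: "add_pow F (q) \<one>\<^bsub>F\<^esub> = \<zero>\<^bsub>F\<^esub>" unfolding q_def
    by (rule F.add.power_order_eq_one[OF finF]) simp
  have g: "gcd n q = 1" using cop by (simp add: q_def F_def)
  obtain x y where xy: "n * x = q * y + 1" using bezout_nat[of n q] n g by auto
  have "add_pow F (n * x) \<one>\<^bsub>F\<^esub> = add_pow F (x) (add_pow F (n) \<one>\<^bsub>F\<^esub>)"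
    by (simp add: F.add.nat_pow_pow)
  also have "\<dots> = \<zero>\<^bsub>F\<^esub>" using n0 by simp
  finally have l: "add_pow F (n * x) \<one>\<^bsub>F\<^esub> = \<zero>\<^bsub>F\<^esub>" .
  have "add_pow F (q * y + 1) \<one>\<^bsub>F\<^esub> = add_pow F (q * y) \<one>\<^bsub>F\<^esub> \<oplus>\<^bsub>F\<^esub> add_pow F (1::nat) \<one>\<^bsub>F\<^esub>"
    by (simp add: F.add.nat_pow_mult)
  also have "add_pow F (q * y) \<one>\<^bsub>F\<^esub> = add_pow F (y) (add_pow F (q) \<one>\<^bsub>F\<^esub>)"
    by (simp add: F.add.nat_pow_pow)
  also have "\<dots> = \<zero>\<^bsub>F\<^esub>" using q0 by simp
  finally have r: "add_pow F (q * y + 1) \<one>\<^bsub>F\<^esub> = \<one>\<^bsub>F\<^esub>" by simp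
  from l r xy show False by simp
qed

end



context cring begin

lemma main_aux:
  assumes fin: "finite (carrier R)" and pid: "\<forall>I. ideal I R \<longrightarrow> principalideal I R"
    and n: "n > 0" and cop: "coprime n (card (carrier (R Quot m)))"
    and cyc: "cyclic_code R n C" and mx: "maximalideal m R"
    and free: "free_code (R Quot (ideal_pow R m (stab_index R m))) n (component R m C)"
  shows "C \<noteq> dual_code R n C"
proof
  assume eq: "C = dual_code R n C"
  have lc: "lin_code R n C" using cyc by (simp add: cyclic_code_def)
  have im: "ideal m R" using mx maximalideal.axioms(1) by blast
  define t where "t = stab_index R m"
  define I where "I = ideal_pow R m t"
  have II: "ideal I R" unfolding I_def by (rule ipow_ideal[OF im])
  have Im: "I \<subseteq> m" unfolding I_def t_def using ipow_sub[OF im] ipow_stab(2)[OF fin mx] by blast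
  have Isq: "I = I \<cdot> I" unfolding I_def t_def by (rule ipow_stab(3)[OF fin mx])
  have free': "free_code (R Quot I) n (psi R I ` C)"
    using free by (simp add: component_def I_def t_def)
  have F1: "\<forall>v\<in>C. vsum R n v \<otimes> a = \<zero>" if a: "a \<in> carrier R" "replicate n a \<in> C" for a
  proof
    fix v assume v: "v \<in> C"
    have "replicate n a \<in> dual_code R n C" using a eq by simp
    hence "inner R n v (replicate n a) = \<zero>" using v by (simp add: dual_code_def)
    thus "vsum R n v \<otimes> a = \<zero>" using inner_const_r code_vecs[OF lc v] a by simp
  qed
  have F3: "replicate n x \<in> C" if x: "x \<in> carrier R" "\<forall>v\<in>C. vsum R n v \<otimes> x = \<zero>" for x
  proof -
    have "replicate n x \<in> dual_code R n C"
      unfolding dual_code_def vecs_def using x inner_const_r code_vecs[OF lc] by auto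
    thus ?thesis using eq by simp
  qed
  have FS: "(\<Oplus>j\<in>{..<n}. a) \<in> I" if a: "a \<in> carrier R" "replicate n a \<in> C" for a
    by (rule free_step[OF lc II free' a F1[OF a]])
  obtain g where g: "g \<in> carrier R" "I = Idl {g}"
    using pid II principalideal.generate by blast
  have IP: "I = PIdl g" using g cgenideal_eq_genideal by simp
  obtain r where r: "r \<in> carrier R" "g = r \<otimes> (g \<otimes> g)"
    using idem_gen[OF g(1)] Isq IP by metis
  define e where "e = r \<otimes> g"
  have ec: "e \<in> carrier R" using r g by (simp add: e_def)
  have eI: "e \<in> I" using IP r by (auto simp: e_def cgenideal_def)
  define N where "N = (\<Oplus>j\<in>{..<n}. \<one>)"
  have Nc: "N \<in> carrier R" by (simp add: N_def)
  have Nmul: "(\<Oplus>j\<in>{..<n}. c) = N \<otimes> c" if "c \<in> carrier R" for c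
    unfolding N_def using finsum_ldistr[of "{..<n}" c "\<lambda>j. \<one>"] that by simp
  define x0 where "x0 = N \<otimes> (\<one> \<ominus> e)"
  have x0c: "x0 \<in> carrier R" using Nc ec by (simp add: x0_def)
  have ann: "\<forall>v\<in>C. vsum R n v \<otimes> x0 = \<zero>"
  proof
    fix v assume v: "v \<in> C"
    define c where "c = vsum R n v"
    have cc: "c \<in> carrier R" using code_vecs[OF lc v] vsum_closed by (simp add: c_def)
    have "replicate n c \<in> C" unfolding c_def by (rule const_in_code[OF cyc n v])
    hence "N \<otimes> c \<in> I" using FS[OF cc] Nmul[OF cc] by simp
    then obtain y where y: "y \<in> carrier R" "N \<otimes> c = y \<otimes> g" using IP by (auto simp: cgenideal_def)
    have "c \<otimes> x0 = (N \<otimes> c) \<otimes> (\<one> \<ominus> e)" using cc Nc ec by (simp add: x0_def m_ac)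
    also have "\<dots> = (y \<otimes> g) \<otimes> (\<one> \<ominus> r \<otimes> g)" using y by (simp add: e_def)
    also have "\<dots> = \<zero>"
    proof -
      have k0: "(y \<otimes> g) \<otimes> (r \<otimes> g) = y \<otimes> (r \<otimes> (g \<otimes> g))" using y(1) r(1) g(1) by (simp add: m_ac)
      have k1: "(y \<otimes> g) \<otimes> (r \<otimes> g) = y \<otimes> g" unfolding k0 by (simp only: r(2)[symmetric])
      have "(y \<otimes> g) \<otimes> (\<one> \<ominus> r \<otimes> g) = (y \<otimes> g) \<otimes> \<one> \<oplus> (y \<otimes> g) \<otimes> (\<ominus> (r \<otimes> g))"
        using y(1) r(1) g(1) by (simp add: a_minus_def r_distr del: r_one)
      also have "\<dots> = y \<otimes> g \<oplus> \<ominus> ((y \<otimes> g) \<otimes> (r \<otimes> g))"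
        using y(1) r(1) g(1) by (simp add: r_minus)
      also have "\<dots> = \<zero>" unfolding k1 using y g by (simp add: r_neg)
      finally show ?thesis .
    qed
    finally show "vsum R n v \<otimes> x0 = \<zero>" by (simp add: c_def)
  qed
  have "(\<Oplus>j\<in>{..<n}. x0) \<in> I" using FS[OF x0c F3[OF x0c ann]] .
  hence A1: "N \<otimes> x0 \<in> I" using Nmul[OF x0c] by simp
  have A2: "N \<otimes> (N \<otimes> e) \<in> I" using eI Nc ec II by (simp add: ideal.I_l_closed)
  have "N \<otimes> x0 \<oplus> N \<otimes> (N \<otimes> e) = N \<otimes> N"
  proof -
    have "N \<otimes> x0 \<oplus> N \<otimes> (N \<otimes> e) = N \<otimes> (x0 \<oplus> N \<otimes> e)" using Nc ec x0c by (simp add: r_distr)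
    also have "x0 \<oplus> N \<otimes> e = N"
    proof -
      have "x0 \<oplus> N \<otimes> e = N \<otimes> ((\<one> \<ominus> e) \<oplus> e)" using Nc ec by (simp add: x0_def r_distr)
      also have "(\<one> \<ominus> e) \<oplus> e = \<one>" using ec by (simp add: a_minus_def a_assoc l_neg)
      finally show ?thesis using Nc by simp
    qed
    finally show ?thesis .
  qed
  hence "N \<otimes> N \<in> I" using A1 A2 II by (metis ideal.axioms(1) additive_subgroup.a_closed)
  hence "N \<otimes> N \<in> m" using Im by blast
  hence "N \<in> m" using primeideal.I_prime[OF maximalideal_prime[OF mx]] Nc by blast
  thus False using not_in_max[OF fin mx cop n] by (simp add: N_def)
qed

end


theorem mainTheorem15:
  fixes R :: "('a, 'b) ring_scheme" and n :: nat and C :: "'a list set" and m :: "'a set"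
  assumes "finite_cpir R"
    and "n > 0"
    and "\<forall>M. maximalideal M R \<longrightarrow> coprime n (card (carrier (R Quot M)))"
    and "cyclic_code R n C"
    and "maximalideal m R"
    and "odd (card (carrier (R Quot m)))"
    and "free_code (R Quot (ideal_pow R m (stab_index R m))) n (component R m C)"
  shows "C \<noteq> dual_code R n C"
proof -
  have cr: "cring R" and fin: "finite (carrier R)" and pid: "\<forall>I. ideal I R \<longrightarrow> principalideal I R"
    using assms(1) by (auto simp: finite_cpir_def)
  have cop: "coprime n (card (carrier (R Quot m)))" using assms(3,5) by blast
  show ?thesis by (rule cring.main_aux[OF cr fin pid assms(2) cop assms(4) assms(5) assms(7)])
qed

end
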